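(* Let $s=(s_m)_{m\ge1}$ be a scale with $S=\mathrm{lcm}(s_m)$ infinite. Then the functions $\{1_{(x)}\}_{x=0,1,2,\dots}$ freely generate the abelian group $C(\mathbb Z_S,\mathbb Z)$ of continuous integer-valued functions on $\mathbb Z_S$: every $f\in C(\mathbb Z_S,\mathbb Z)$ can be written uniquely as a finite sum $f=\sum_{x\ge0}f_{(x)}1_{(x)}$ with $f_{(x)}\in\mathbb Z$.
   Context: A scale is a sequence of positive integers $(s_m)_{m\ge1}$ with $s_m\mid s_{m+1}$ and $s_m<s_{m+1}$; set $s_0=1$. $\mathbb Z_S=\varprojlim\mathbb Z/s_m\mathbb Z$ (sequences $(y_m)$ with $y_{m+1}\equiv y_m \bmod s_m$, product topology), containing $\mathbb Z$ as a dense subgroup. For $w\in\mathbb Z_S$ and $n\ge0$, "$s_n\mid w$" means the image of $w$ in $\mathbb Z/s_n\mathbb Z$ is $0$. For $n\ge0$ and integer $0\le x<s_n$, $1_{(n,x)}$ is the function on $\mathbb Z_S$ equal to $1$ at $z$ if $s_n\mid(z-x)$ and $0$ otherwise. For integers $x\ge1$ let $n(x)\ge1$ be defined by $s_{n(x)-1}\le x<s_{n(x)}$, and set $1_{(x)}:=1_{(n(x),x)}$; also $1_{(0)}:=1_{(0,0)}\equiv1$. *)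

theory Defs
  imports "HOL-Analysis.Analysis"
begin

definition is_scale :: "(nat \<Rightarrow> nat) \<Rightarrow> bool" where
  "is_scale s \<longleftrightarrow> s 0 = 1 \<and>
     (\<forall>m\<ge>1. 0 < s m \<and> s m dvd s (Suc m) \<and> s m < s (Suc m))"

text \<open>lcm of the s_m is finite iff some positive integer is divisible by all s_m.\<close>
definition lcm_infinite :: "(nat \<Rightarrow> nat) \<Rightarrow> bool" where
  "lcm_infinite s \<longleftrightarrow> \<not> (\<exists>N::nat. N > 0 \<and> (\<forall>m. s m dvd N))"

text \<open>Z_S as the inverse limit: compatible sequences of canonical residues y m \<in> {0..<s m},
  with y (m+1) \<equiv> y m mod s m. Index 0 is the trivial component Z/1Z. It carries the
  subspace topology of the product topology on nat \<Rightarrow> int.\<close>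
definition ZS :: "(nat \<Rightarrow> nat) \<Rightarrow> (nat \<Rightarrow> int) set" where
  "ZS s = {y. (\<forall>m. 0 \<le> y m \<and> y m < int (s m)) \<and>
               (\<forall>m. y (Suc m) mod int (s m) = y m mod int (s m))}"

text \<open>1_{(n,x)}: equals 1 at z iff s_n divides z - x, i.e. the image of z in Z/s_n Z is x mod s_n.\<close>
definition ind :: "(nat \<Rightarrow> nat) \<Rightarrow> nat \<Rightarrow> nat \<Rightarrow> (nat \<Rightarrow> int) \<Rightarrow> int" where
  "ind s n x z = (if int (s n) dvd (z n - int x) then 1 else 0)"

definition nidx :: "(nat \<Rightarrow> nat) \<Rightarrow> nat \<Rightarrow> nat" where
  "nidx s x = (THE n. n \<ge> 1 \<and> s (n - 1) \<le> x \<and> x < s n)"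

definition indx :: "(nat \<Rightarrow> nat) \<Rightarrow> nat \<Rightarrow> (nat \<Rightarrow> int) \<Rightarrow> int" where
  "indx s x = (if x = 0 then ind s 0 0 else ind s (nidx s x) x)"

end

theory Submission
  imports Defs
begin

lemma cont_int: "continuous_on (S::int set) f" by simp

lemma open_int_sing: "open {c::int}"
proof -
  have "{c::int} = {c-1<..<c+1}" by auto
  thus ?thesis by simp
qed

lemma ZS_eq: "ZS s = PiE UNIV (\<lambda>m. {0..<int (s m)}) \<inter> (\<Inter>m. {y. y (Suc m) mod int (s m) = y m mod int (s m)})"
  unfolding ZS_def by (auto simp: PiE_iff)

lemma coord_mod: "continuous_on UNIV (\<lambda>y::nat\<Rightarrow>int. y k mod c)"
proof -
  have "continuous_on UNIV ((\<lambda>k. k mod c) \<circ> (\<lambda>y::nat\<Rightarrow>int. y k))"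
    by (rule continuous_on_compose) (auto intro: cont_int)
  thus ?thesis by (simp add: o_def)
qed

lemma ZS_compact: "compact (ZS s)"
proof -
  have "compactin (product_topology (\<lambda>_. euclidean) UNIV) (PiE UNIV (\<lambda>m. {0..<int (s m)}))"
    by (simp add: compactin_PiE compactin_euclidean_iff finite_imp_compact)
  hence "compact (PiE UNIV (\<lambda>m. {0..<int (s m)}))"
    by (simp add: euclidean_product_topology compactin_euclidean_iff)
  moreover have "closed (\<Inter>m. {y::nat\<Rightarrow>int. y (Suc m) mod int (s m) = y m mod int (s m)})"
    by (intro closed_INT ballI closed_Collect_eq coord_mod)
  ultimately show ?thesis unfolding ZS_eq by (rule compact_Int_closed)
qed

lemma open_coord: "open {w::nat\<Rightarrow>int. w k = c}"
proof -
  have "open ((\<lambda>w::nat\<Rightarrow>int. w k) -` {c})"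
    by (rule open_vimage[OF open_int_sing]) simp
  moreover have "(\<lambda>w::nat\<Rightarrow>int. w k) -` {c} = {w. w k = c}" by auto
  ultimately show ?thesis by simp
qed

lemma spos: "is_scale s \<Longrightarrow> 0 < s m"
  unfolding is_scale_def by (cases m) auto

lemma sdvd: "is_scale s \<Longrightarrow> s m dvd s (Suc m)"
  unfolding is_scale_def by (cases m) auto

lemma sdvd_le: assumes "is_scale s" "m \<le> n" shows "s m dvd s n"
  using assms(2)
proof (induction n)
  case 0 thus ?case by simp
next
  case (Suc n)
  show ?case
  proof (cases "m = Suc n")
    case False
    hence "s m dvd s n" using Suc by simp
    thus ?thesis using sdvd[OF assms(1), of n] dvd_trans by blast
  qed simp
qed

lemma smono: assumes "is_scale s" "m \<le> n" shows "s m \<le> s n"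
  using sdvd_le[OF assms] spos[OF assms(1)] by (simp add: dvd_imp_le)

lemma sge: assumes "is_scale s" shows "m \<le> s m"
proof (induction m)
  case 0 thus ?case by simp
next
  case (Suc m)
  show ?case
  proof (cases "m = 0")
    case True thus ?thesis using spos[OF assms, of 1] by simp
  next
    case False
    hence "s m < s (Suc m)" using assms unfolding is_scale_def by auto
    thus ?thesis using Suc by simp
  qed
qed

lemma ZS_range: "z \<in> ZS s \<Longrightarrow> 0 \<le> z m \<and> z m < int (s m)"
  unfolding ZS_def by blast

lemma ZS_step: "z \<in> ZS s \<Longrightarrow> z (Suc m) mod int (s m) = z m"
proof -
  assume z: "z \<in> ZS s"
  hence "z (Suc m) mod int (s m) = z m mod int (s m)" unfolding ZS_def by blast
  also have "\<dots> = z m" using ZS_range[OF z, of m] by (simp only: mod_pos_pos_trivial)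
  finally show ?thesis .
qed

lemma ZS_coord: assumes "is_scale s" "z \<in> ZS s" "m \<le> n" shows "z m = z n mod int (s m)"
  using assms(3)
proof (induction n)
  case 0
  hence "m = 0" by simp
  thus ?case using ZS_range[OF assms(2), of 0] by (simp only: mod_pos_pos_trivial)
next
  case (Suc n)
  show ?case
  proof (cases "m = Suc n")
    case True
    thus ?thesis using ZS_range[OF assms(2), of m] by (simp only: mod_pos_pos_trivial)
  next
    case False
    hence IH: "z m = z n mod int (s m)" using Suc by simp
    have zn: "z (Suc n) mod int (s n) = z n" by (rule ZS_step[OF assms(2)])
    have "s m dvd s n" using sdvd_le[OF assms(1)] False Suc.prems by simp
    hence "int (s m) dvd int (s n)" by (simp only: of_nat_dvd_iff)
    hence "(z (Suc n) mod int (s n)) mod int (s m) = z (Suc n) mod int (s m)"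
      by (rule mod_mod_cancel)
    thus ?thesis using zn IH by simp
  qed
qed

definition emb :: "(nat \<Rightarrow> nat) \<Rightarrow> nat \<Rightarrow> nat \<Rightarrow> int" where
  "emb s r = (\<lambda>m. int (r mod s m))"

lemma emb_ZS: assumes "is_scale s" shows "emb s r \<in> ZS s"
  unfolding ZS_def mem_Collect_eq
proof (intro conjI allI)
  fix m
  show "0 \<le> emb s r m" unfolding emb_def by simp
  have "r mod s m < s m" using spos[OF assms, of m] by simp
  thus "emb s r m < int (s m)" unfolding emb_def by simp
  have "r mod s (Suc m) mod s m = r mod s m"
    using sdvd[OF assms, of m] by (rule mod_mod_cancel)
  hence "int (r mod s (Suc m) mod s m) = int (r mod s m mod s m)" by simp
  thus "emb s r (Suc m) mod int (s m) = emb s r m mod int (s m)"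
    unfolding emb_def by (simp only: of_nat_mod)
qed

lemma ind_ZS: assumes "z \<in> ZS s" "x < s n"
  shows "ind s n x z = (if z n = int x then 1 else 0)"
proof -
  have a: "0 \<le> z n" "z n < int (s n)" using assms(1) unfolding ZS_def by auto
  have "int (s n) dvd (z n - int x) \<longleftrightarrow> z n mod int (s n) = int x mod int (s n)"
    by (simp add: mod_eq_dvd_iff)
  also have "\<dots> \<longleftrightarrow> z n = int x" using a assms(2) by simp
  finally show ?thesis unfolding ind_def by simp
qed

lemma nidx_eq: assumes "is_scale s" "1 \<le> n" "s (n-1) \<le> x" "x < s n"
  shows "nidx s x = n"
  unfolding nidx_def
proof (rule the_equality)
  show "1 \<le> n \<and> s (n - 1) \<le> x \<and> x < s n" using assms by simp
  fix n' assume h: "1 \<le> n' \<and> s (n' - 1) \<le> x \<and> x < s n'"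
  show "n' = n"
  proof (rule ccontr)
    assume "n' \<noteq> n"
    hence "n' \<le> n - 1 \<or> n \<le> n' - 1" using assms(2) h by linarith
    thus False
    proof
      assume "n' \<le> n - 1"
      hence "s n' \<le> s (n-1)" by (rule smono[OF assms(1)])
      thus False using h assms(3) by linarith
    next
      assume "n \<le> n' - 1"
      hence "s n \<le> s (n'-1)" by (rule smono[OF assms(1)])
      thus False using h assms(4) by linarith
    qed
  qed
qed

lemma nidx_ex: assumes "is_scale s" "1 \<le> x"
  shows "1 \<le> nidx s x \<and> s (nidx s x - 1) \<le> x \<and> x < s (nidx s x)"
proof -
  define n where "n = (LEAST n. x < s n)"
  have ex: "x < s (Suc x)" using sge[OF assms(1), of "Suc x"] by simp
  hence xn: "x < s n" unfolding n_def by (rule LeastI)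
  have "n \<noteq> 0"
  proof
    assume "n = 0" thus False using xn assms unfolding is_scale_def by simp
  qed
  moreover have "s (n-1) \<le> x"
  proof -
    have "\<not> x < s (n-1)" unfolding n_def by (rule not_less_Least) (use \<open>n \<noteq> 0\<close> n_def in simp)
    thus ?thesis by simp
  qed
  ultimately have "nidx s x = n" using nidx_eq[OF assms(1), of n x] xn by simp
  thus ?thesis using xn \<open>s (n-1) \<le> x\<close> \<open>n \<noteq> 0\<close> by simp
qed

lemma indx_self: assumes "is_scale s" shows "indx s x (emb s x) = 1"
proof (cases "x = 0")
  case True thus ?thesis unfolding indx_def ind_def using assms by (simp add: is_scale_def)
next
  case False
  define n where "n = nidx s x"
  have n: "nidx s x = n" "x < s n" using nidx_ex[OF assms, of x] False n_def by auto
  have "emb s x n = int x" using n(2) by (simp add: emb_def)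
  hence "ind s n x (emb s x) = 1" using ind_ZS[OF emb_ZS[OF assms] n(2)] by simp
  thus ?thesis using False n unfolding indx_def by simp
qed

lemma indx_gt: assumes "is_scale s" "x < x'" shows "indx s x' (emb s x) = 0"
proof -
  have "x' \<noteq> 0" using assms by simp
  define n where "n = nidx s x'"
  have n: "nidx s x' = n" "x' < s n" using nidx_ex[OF assms(1), of x'] \<open>x' \<noteq> 0\<close> n_def by auto
  have "emb s x n = int x" using n(2) assms(2) by (simp add: emb_def)
  hence "ind s n x' (emb s x) = 0" using ind_ZS[OF emb_ZS[OF assms(1)] n(2)] assms(2) by simp
  thus ?thesis using \<open>x' \<noteq> 0\<close> n unfolding indx_def by simp
qed


lemma local_const:
  fixes f :: "(nat \<Rightarrow> int) \<Rightarrow> int"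
  assumes sc: "is_scale s" and f: "continuous_on (ZS s) f" and z: "z \<in> ZS s"
  shows "\<exists>N. \<forall>w\<in>ZS s. w N = z N \<longrightarrow> f w = f z"
proof -
  have ct: "\<forall>x\<in>ZS s. \<forall>B. open B \<longrightarrow> f x \<in> B \<longrightarrow> (\<exists>A. open A \<and> x \<in> A \<and> (\<forall>y\<in>ZS s. y \<in> A \<longrightarrow> f y \<in> B))"
    using f unfolding continuous_on_topological .
  have "f z \<in> {f z}" by simp
  from ct[rule_format, OF z open_int_sing[of "f z"] this] obtain A where
    A: "open A" "z \<in> A" "\<forall>y\<in>ZS s. y \<in> A \<longrightarrow> f y \<in> {f z}" by blast
  have "openin (product_topology (\<lambda>i. euclidean) UNIV) A" using A(1) unfolding open_fun_def .
  from product_topology_open_contains_basis[OF this A(2)] obtain X where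
    X: "z \<in> (\<Pi>\<^sub>E i\<in>UNIV. X i)" "finite {i. X i \<noteq> topspace euclidean}" "(\<Pi>\<^sub>E i\<in>UNIV. X i) \<subseteq> A"
    by blast
  define F where "F = {i. X i \<noteq> UNIV}"
  have "finite F" using X(2) unfolding F_def by simp
  then obtain N where N: "\<forall>i\<in>F. i \<le> N" using finite_nat_set_iff_bounded_le by blast
  show ?thesis
  proof (intro exI ballI impI)
    fix w assume w: "w \<in> ZS s" "w N = z N"
    have "w \<in> (\<Pi>\<^sub>E i\<in>UNIV. X i)"
    proof (unfold PiE_UNIV_domain, rule Pi_I)
      fix i :: nat
      show "w i \<in> X i"
      proof (cases "i \<in> F")
        case True
        hence "i \<le> N" using N by blast
        hence "w i = z i" using ZS_coord[OF sc w(1), of i N] ZS_coord[OF sc z, of i N] w(2) by simp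
        moreover have "z i \<in> X i" using X(1) unfolding PiE_UNIV_domain Pi_def by blast
        ultimately show ?thesis by simp
      next
        case False thus ?thesis unfolding F_def by simp
      qed
    qed
    hence "w \<in> A" using X(3) by blast
    thus "f w = f z" using A(3) w(1) by blast
  qed
qed

lemma unif_const:
  fixes f :: "(nat \<Rightarrow> int) \<Rightarrow> int"
  assumes sc: "is_scale s" and f: "continuous_on (ZS s) f"
  shows "\<exists>N. \<forall>w\<in>ZS s. \<forall>w'\<in>ZS s. w N = w' N \<longrightarrow> f w = f w'"
proof -
  have "\<forall>z\<in>ZS s. \<exists>N. \<forall>w\<in>ZS s. w N = z N \<longrightarrow> f w = f z"
    using local_const[OF sc f] by blast
  from bchoice[OF this] obtain Nf where Nf0: "\<forall>z\<in>ZS s. \<forall>w\<in>ZS s. w (Nf z) = z (Nf z) \<longrightarrow> f w = f z"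
    by blast
  have Nf: "\<And>z w. z \<in> ZS s \<Longrightarrow> w \<in> ZS s \<Longrightarrow> w (Nf z) = z (Nf z) \<Longrightarrow> f w = f z"
    using Nf0 by blast
  have cov: "ZS s \<subseteq> (\<Union>z\<in>ZS s. {w. w (Nf z) = z (Nf z)})" by blast
  obtain C where C: "C \<subseteq> ZS s" "finite C" "ZS s \<subseteq> (\<Union>z\<in>C. {w. w (Nf z) = z (Nf z)})"
    by (rule compactE_image[OF ZS_compact open_coord cov]) blast
  obtain N where N: "\<forall>i\<in>Nf ` C. i \<le> N" using C(2) finite_nat_set_iff_bounded_le by blast
  show ?thesis
  proof (intro exI ballI impI)
    fix w w' assume w: "w \<in> ZS s" "w' \<in> ZS s" "w N = w' N"
    then obtain c where c: "c \<in> C" "w (Nf c) = c (Nf c)" using C(3) by blast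
    have le: "Nf c \<le> N" using N c(1) by blast
    have "w' (Nf c) = w (Nf c)" using ZS_coord[OF sc w(1) le] ZS_coord[OF sc w(2) le] w(3) by simp
    hence "f w' = f c" using Nf[of c w'] c C(1) w(2) by (simp add: subset_iff)
    moreover have "f w = f c" using Nf[of c w] c C(1) w(1) by (simp add: subset_iff)
    ultimately show "f w = f w'" by simp
  qed
qed


inductive Rep :: "(nat \<Rightarrow> nat) \<Rightarrow> ((nat \<Rightarrow> int) \<Rightarrow> int) \<Rightarrow> bool" for s where
  base: "Rep s (indx s x)"
| zero: "Rep s (\<lambda>z. 0)"
| add: "Rep s g \<Longrightarrow> Rep s h \<Longrightarrow> Rep s (\<lambda>z. g z + h z)"
| smul: "Rep s g \<Longrightarrow> Rep s (\<lambda>z. k * g z)"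
| ext: "Rep s g \<Longrightarrow> (\<forall>z\<in>ZS s. g z = h z) \<Longrightarrow> Rep s h"

lemma sum_supp:
  fixes c :: "nat \<Rightarrow> int"
  assumes "finite A" "{x. c x \<noteq> 0} \<subseteq> A"
  shows "(\<Sum>x\<in>{x. c x \<noteq> 0}. c x * \<phi> x) = (\<Sum>x\<in>A. c x * \<phi> x)"
  by (rule sum.mono_neutral_left) (use assms in auto)

lemma Rep_repr:
  assumes "Rep s g"
  shows "\<exists>c. finite {x. c x \<noteq> 0} \<and> (\<forall>z\<in>ZS s. g z = (\<Sum>x\<in>{x. c x \<noteq> 0}. c x * indx s x z))"
  using assms
proof induction
  case (base x)
  define c :: "nat \<Rightarrow> int" where "c = (\<lambda>y. if y = x then 1 else 0)"
  have "{y. c y \<noteq> 0} = {x}" unfolding c_def by auto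
  thus ?case by (intro exI[of _ c]) (simp add: c_def)
next
  case zero
  show ?case by (intro exI[of _ "\<lambda>_. 0"]) simp
next
  case (add g h)
  then obtain c1 c2 where c1: "finite {x. c1 x \<noteq> 0}" "\<forall>z\<in>ZS s. g z = (\<Sum>x\<in>{x. c1 x \<noteq> 0}. c1 x * indx s x z)"
    and c2: "finite {x. c2 x \<noteq> 0}" "\<forall>z\<in>ZS s. h z = (\<Sum>x\<in>{x. c2 x \<noteq> 0}. c2 x * indx s x z)"
    by blast
  define A where "A = {x. c1 x \<noteq> 0} \<union> {x. c2 x \<noteq> 0}"
  have A: "finite A" using c1 c2 A_def by simp
  define c where "c = (\<lambda>x. c1 x + c2 x)"
  have sc: "{x. c x \<noteq> 0} \<subseteq> A" unfolding A_def c_def by auto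
  have fc: "finite {x. c x \<noteq> 0}" using finite_subset[OF sc A] .
  show ?case
  proof (intro exI[of _ c] conjI fc ballI)
    fix z assume z: "z \<in> ZS s"
    have "g z + h z = (\<Sum>x\<in>A. c1 x * indx s x z) + (\<Sum>x\<in>A. c2 x * indx s x z)"
      using c1(2) c2(2) z sum_supp[OF A, of c1] sum_supp[OF A, of c2] A_def by auto
    also have "\<dots> = (\<Sum>x\<in>A. c x * indx s x z)"
      unfolding c_def by (simp add: sum.distrib distrib_right)
    also have "\<dots> = (\<Sum>x\<in>{x. c x \<noteq> 0}. c x * indx s x z)"
      using sum_supp[OF A sc] by simp
    finally show "g z + h z = (\<Sum>x\<in>{x. c x \<noteq> 0}. c x * indx s x z)" .
  qed
next
  case (smul g k)
  then obtain c1 where c1: "finite {x. c1 x \<noteq> 0}" "\<forall>z\<in>ZS s. g z = (\<Sum>x\<in>{x. c1 x \<noteq> 0}. c1 x * indx s x z)"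
    by blast
  define A where "A = {x. c1 x \<noteq> 0}"
  have A: "finite A" using c1 A_def by simp
  define c where "c = (\<lambda>x. k * c1 x)"
  have sc: "{x. c x \<noteq> 0} \<subseteq> A" unfolding A_def c_def by auto
  have fc: "finite {x. c x \<noteq> 0}" using finite_subset[OF sc A] .
  show ?case
  proof (intro exI[of _ c] conjI fc ballI)
    fix z assume z: "z \<in> ZS s"
    have "k * g z = k * (\<Sum>x\<in>A. c1 x * indx s x z)"
      using c1(2) z A_def by auto
    also have "\<dots> = (\<Sum>x\<in>A. c x * indx s x z)"
      unfolding c_def by (simp add: sum_distrib_left mult.assoc)
    also have "\<dots> = (\<Sum>x\<in>{x. c x \<noteq> 0}. c x * indx s x z)"
      using sum_supp[OF A sc] by simp
    finally show "k * g z = (\<Sum>x\<in>{x. c x \<noteq> 0}. c x * indx s x z)" .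
  qed
next
  case (ext g h)
  then show ?case by metis
qed

lemma Rep_sum:
  assumes "finite R" "\<forall>r\<in>R. Rep s (g r)"
  shows "Rep s (\<lambda>z. \<Sum>r\<in>R. g r z)"
  using assms
proof (induction R rule: finite_induct)
  case empty
  show ?case using Rep.zero by simp
next
  case (insert r R)
  have "Rep s (\<lambda>z. g r z + (\<Sum>r\<in>R. g r z))"
    using insert Rep.add[of s "g r"] by (metis insertI1 insert_iff)
  thus ?case using insert(1,2) by simp
qed

lemma count_lemma:
  fixes v a r q :: nat
  assumes "0 < a" "r < a" "v < q * a"
  shows "(\<Sum>k<q. if v = r + k * a then 1 else 0 :: int) = (if v mod a = r then 1 else 0)"
proof (cases "v mod a = r")
  case True
  define k0 where "k0 = v div a"
  have v: "v = r + k0 * a" using True k0_def by (metis mod_div_mult_eq add.commute)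
  have k0: "k0 < q" using assms(3) v by (metis less_mult_imp_div_less k0_def)
  have "\<And>k. (v = r + k * a) \<longleftrightarrow> k = k0"
  proof
    fix k assume "v = r + k * a"
    hence "v div a = k" using assms(1,2) by simp
    thus "k = k0" using k0_def by simp
  qed (use v in simp)
  hence "(\<Sum>k<q. if v = r + k * a then 1 else 0 :: int) = (\<Sum>k<q. if k = k0 then 1 else 0)" by simp
  also have "\<dots> = 1" using k0 by simp
  finally show ?thesis using True by simp
next
  case False
  have "\<And>k. v \<noteq> r + k * a"
  proof
    fix k assume "v = r + k * a"
    hence "v mod a = r" using assms(2) by simp
    thus False using False by simp
  qed
  thus ?thesis using False by simp
qed


lemma top_Rep: assumes sc: "is_scale s" "s m \<le> r" "r < s (Suc m)"
  shows "Rep s (ind s (Suc m) r)"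
proof -
  have "r \<noteq> 0" using spos[OF sc(1), of m] assms(2) by simp
  have "nidx s r = Suc m" using nidx_eq[OF sc(1), of "Suc m" r] assms by simp
  hence "indx s r = ind s (Suc m) r" using \<open>r \<noteq> 0\<close> unfolding indx_def by (simp add: fun_eq_iff)
  thus ?thesis using Rep.base[of s r] by simp
qed

lemma ind_Rep: assumes sc: "is_scale s" shows "r < s n \<Longrightarrow> Rep s (ind s n r)"
proof (induction n arbitrary: r)
  case 0
  hence "r = 0" using sc unfolding is_scale_def by simp
  moreover have "indx s 0 = ind s 0 0" unfolding indx_def by (simp add: fun_eq_iff)
  ultimately show ?case using Rep.base[of s 0] by simp
next
  case (Suc m)
  show ?case
  proof (cases "s m \<le> r")
    case True thus ?thesis using top_Rep[OF sc True Suc.prems] by simp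
  next
    case False
    hence rlt: "r < s m" by simp
    define a where "a = s m"
    define q where "q = s (Suc m) div a"
    have apos: "0 < a" using spos[OF sc] a_def by simp
    have sq: "s (Suc m) = q * a" using sdvd[OF sc, of m] unfolding q_def a_def by simp
    have q1: "1 \<le> q" using sq spos[OF sc, of "Suc m"] by (cases q) auto
    define T where "T = (\<lambda>z. \<Sum>k\<in>{1..<q}. ind s (Suc m) (r + k * a) z)"
    have bnd: "r + k * a < s (Suc m)" if "k < q" for k
    proof -
      have "r + k * a < a + k * a" using rlt a_def by simp
      also have "\<dots> = (k + 1) * a" by simp
      also have "\<dots> \<le> q * a" using that by (intro mult_le_mono1) simp
      finally show ?thesis using sq by simp
    qed
    have "Rep s T" unfolding T_def
    proof (rule Rep_sum, simp, rule ballI)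
      fix k assume k: "k \<in> {1..<q}"
      have "s m \<le> r + k * a" using k a_def by (cases k) auto
      thus "Rep s (ind s (Suc m) (r + k * a))" using top_Rep[OF sc _ bnd] k by simp
    qed
    hence R: "Rep s (\<lambda>z. ind s m r z + (-1) * T z)"
      using Rep.add[OF Suc.IH[OF rlt] Rep.smul[of s T "-1"]] by simp
    have "\<forall>z\<in>ZS s. ind s m r z + (-1) * T z = ind s (Suc m) r z"
    proof
      fix z assume z: "z \<in> ZS s"
      define v where "v = nat (z (Suc m))"
      have zv: "z (Suc m) = int v" using ZS_range[OF z, of "Suc m"] v_def by simp
      have "int v < int (s (Suc m))" using ZS_range[OF z, of "Suc m"] zv by simp
      hence "v < s (Suc m)" by (simp only: of_nat_less_iff)
      hence vlt: "v < q * a" using sq by simp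
      have zm: "z m = int (v mod a)" using ZS_coord[OF sc z, of m "Suc m"] zv a_def
        by (simp add: of_nat_mod)
      have i1: "ind s m r z = (if v mod a = r then 1 else 0)"
        using ind_ZS[OF z rlt] zm by simp
      have i2: "ind s (Suc m) (r + k * a) z = (if v = r + k * a then 1 else 0)" if "k < q" for k
      proof -
        have "ind s (Suc m) (r + k * a) z = (if z (Suc m) = int (r + k * a) then 1 else 0)"
          by (rule ind_ZS[OF z bnd[OF that]])
        thus ?thesis unfolding zv of_nat_eq_iff .
      qed
      have "(\<Sum>k<q. ind s (Suc m) (r + k * a) z) = (\<Sum>k<q. if v = r + k * a then 1 else 0)"
        using i2 by simp
      also have "\<dots> = ind s m r z" using count_lemma[OF apos _ vlt] rlt a_def i1 by simp
      finally have S: "(\<Sum>k<q. ind s (Suc m) (r + k * a) z) = ind s m r z" .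
      have "{..<q} = insert 0 {1..<q}" using q1 by auto
      hence "(\<Sum>k<q. ind s (Suc m) (r + k * a) z) = ind s (Suc m) r z + T z"
        unfolding T_def by simp
      thus "ind s m r z + (-1) * T z = ind s (Suc m) r z" using S by simp
    qed
    thus ?thesis using Rep.ext[OF R] by blast
  qed
qed


lemma existence:
  fixes f :: "(nat \<Rightarrow> int) \<Rightarrow> int"
  assumes sc: "is_scale s" and f: "continuous_on (ZS s) f"
  shows "Rep s f"
proof -
  obtain N where N: "\<forall>w\<in>ZS s. \<forall>w'\<in>ZS s. w N = w' N \<longrightarrow> f w = f w'"
    using unif_const[OF sc f] by blast
  define g where "g = (\<lambda>z. \<Sum>r\<in>{..<s N}. f (emb s r) * ind s N r z)"
  have "Rep s g" unfolding g_def
    by (rule Rep_sum) (auto intro: Rep.smul ind_Rep[OF sc])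
  moreover have "\<forall>z\<in>ZS s. g z = f z"
  proof
    fix z assume z: "z \<in> ZS s"
    define t where "t = nat (z N)"
    have zt: "z N = int t" using ZS_range[OF z, of N] t_def by simp
    have "int t < int (s N)" using ZS_range[OF z, of N] zt by simp
    hence tlt: "t < s N" by (simp only: of_nat_less_iff)
    have "\<And>r. r \<in> {..<s N} \<Longrightarrow> f (emb s r) * ind s N r z = (if r = t then f (emb s r) else 0)"
    proof -
      fix r assume "r \<in> {..<s N}"
      hence "ind s N r z = (if z N = int r then 1 else 0)" using ind_ZS[OF z] by simp
      thus "f (emb s r) * ind s N r z = (if r = t then f (emb s r) else 0)" unfolding zt by auto
    qed
    hence "g z = (\<Sum>r\<in>{..<s N}. if r = t then f (emb s r) else 0)" unfolding g_def
      by (rule sum.cong[OF refl])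
    also have "\<dots> = f (emb s t)" using tlt by simp
    also have "\<dots> = f z"
    proof -
      have "emb s t N = z N" unfolding emb_def zt using tlt by simp
      thus ?thesis using N emb_ZS[OF sc] z by blast
    qed
    finally show "g z = f z" .
  qed
  ultimately show ?thesis by (rule Rep.ext)
qed

lemma eval_emb:
  fixes c :: "nat \<Rightarrow> int"
  assumes sc: "is_scale s" and fin: "finite {x. c x \<noteq> 0}"
  shows "(\<Sum>x\<in>{x. c x \<noteq> 0}. c x * indx s x (emb s y)) = c y + (\<Sum>x<y. c x * indx s x (emb s y))"
proof -
  define A where "A = {x. c x \<noteq> 0} \<union> {..y}"
  have A: "finite A" using fin A_def by simp
  have "(\<Sum>x\<in>{x. c x \<noteq> 0}. c x * indx s x (emb s y)) = (\<Sum>x\<in>A. c x * indx s x (emb s y))"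
    by (rule sum_supp[OF A]) (auto simp: A_def)
  also have "\<dots> = (\<Sum>x\<in>{..y}. c x * indx s x (emb s y))"
  proof (rule sum.mono_neutral_right[OF A])
    show "{..y} \<subseteq> A" unfolding A_def by auto
    show "\<forall>x\<in>A - {..y}. c x * indx s x (emb s y) = 0"
      using indx_gt[OF sc] by auto
  qed
  also have "\<dots> = (\<Sum>x<Suc y. c x * indx s x (emb s y))" by (simp add: lessThan_Suc_atMost)
  also have "\<dots> = c y + (\<Sum>x<y. c x * indx s x (emb s y))" using indx_self[OF sc] by simp
  finally show ?thesis .
qed

theorem mainTheorem11:
  fixes s :: "nat \<Rightarrow> nat"
  assumes "is_scale s" and "lcm_infinite s"
  shows "\<forall>f :: (nat \<Rightarrow> int) \<Rightarrow> int. continuous_on (ZS s) f \<longrightarrow>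
           (\<exists>!c :: nat \<Rightarrow> int. finite {x. c x \<noteq> 0} \<and>
              (\<forall>z\<in>ZS s. f z = (\<Sum>x\<in>{x. c x \<noteq> 0}. c x * indx s x z)))"
proof (intro allI impI)
  fix f :: "(nat \<Rightarrow> int) \<Rightarrow> int"
  assume f: "continuous_on (ZS s) f"
  note sc = assms(1)
  show "\<exists>!c :: nat \<Rightarrow> int. finite {x. c x \<noteq> 0} \<and>
              (\<forall>z\<in>ZS s. f z = (\<Sum>x\<in>{x. c x \<noteq> 0}. c x * indx s x z))"
  proof (rule ex_ex1I)
    show "\<exists>c :: nat \<Rightarrow> int. finite {x. c x \<noteq> 0} \<and>
              (\<forall>z\<in>ZS s. f z = (\<Sum>x\<in>{x. c x \<noteq> 0}. c x * indx s x z))"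
      using Rep_repr[OF existence[OF sc f]] .
  next
    fix c1 c2 :: "nat \<Rightarrow> int"
    assume h1: "finite {x. c1 x \<noteq> 0} \<and> (\<forall>z\<in>ZS s. f z = (\<Sum>x\<in>{x. c1 x \<noteq> 0}. c1 x * indx s x z))"
      and h2: "finite {x. c2 x \<noteq> 0} \<and> (\<forall>z\<in>ZS s. f z = (\<Sum>x\<in>{x. c2 x \<noteq> 0}. c2 x * indx s x z))"
    have "c1 y = c2 y" for y
    proof (induction y rule: less_induct)
      case (less y)
      have "c1 y + (\<Sum>x<y. c1 x * indx s x (emb s y)) = f (emb s y)"
        using h1 eval_emb[OF sc, of c1 y] emb_ZS[OF sc, of y] by simp
      moreover have "c2 y + (\<Sum>x<y. c2 x * indx s x (emb s y)) = f (emb s y)"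
        using h2 eval_emb[OF sc, of c2 y] emb_ZS[OF sc, of y] by simp
      moreover have "(\<Sum>x<y. c1 x * indx s x (emb s y)) = (\<Sum>x<y. c2 x * indx s x (emb s y))"
        using less by (intro sum.cong) auto
      ultimately show ?case by linarith
    qed
    thus "c1 = c2" by blast
  qed
qed

end
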